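(* Let $A,B\in M_n(\mathbb{R}_+)$ be nilpotent and let $C=[A,B]_\oplus = AB\oplus BA$. If $AC=BC=0$, then $A$ and $B$ are simultaneously triangularizable.
   Context: Max algebra: $\mathbb{R}_+$ the nonnegative reals with $a\oplus b=\max\{a,b\}$ and ordinary multiplication; for $A,B\in M_n(\mathbb{R}_+)$, $(AB)_{ij}=\max_k a_{ik}b_{kj}$ and $(A\oplus B)_{ij}=\max\{a_{ij},b_{ij}\}$. A matrix is nilpotent if some power (max-product) is $0$. $GL_n(\mathbb{R}_+)$ is the set of matrices invertible under this product (the generalized permutation matrices). $A,B$ are simultaneously triangularizable if there is one $P\in GL_n(\mathbb{R}_+)$ with both $P^{-1}AP$ and $P^{-1}BP$ upper triangular. *)

theory Defs
  imports Main "HOL.Real"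
begin

text \<open>n x n matrices over the max algebra R_+, represented as functions
  nat => nat => real; only entries with indices i, j < n are meaningful.\<close>

definition nonneg_mat :: "nat \<Rightarrow> (nat \<Rightarrow> nat \<Rightarrow> real) \<Rightarrow> bool" where
  "nonneg_mat n A \<longleftrightarrow> (\<forall>i<n. \<forall>j<n. A i j \<ge> 0)"

text \<open>Max-product: (AB)_ij = max_k a_ik b_kj (empty max taken as 0, only relevant for n = 0).\<close>
definition mmult :: "nat \<Rightarrow> (nat \<Rightarrow> nat \<Rightarrow> real) \<Rightarrow> (nat \<Rightarrow> nat \<Rightarrow> real) \<Rightarrow> (nat \<Rightarrow> nat \<Rightarrow> real)" where
  "mmult n A B = (\<lambda>i j. Max (insert 0 ((\<lambda>k. A i k * B k j) ` {..<n})))"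

definition mplus :: "(nat \<Rightarrow> nat \<Rightarrow> real) \<Rightarrow> (nat \<Rightarrow> nat \<Rightarrow> real) \<Rightarrow> (nat \<Rightarrow> nat \<Rightarrow> real)" where
  "mplus A B = (\<lambda>i j. max (A i j) (B i j))"

definition mat_eq :: "nat \<Rightarrow> (nat \<Rightarrow> nat \<Rightarrow> real) \<Rightarrow> (nat \<Rightarrow> nat \<Rightarrow> real) \<Rightarrow> bool" where
  "mat_eq n A B \<longleftrightarrow> (\<forall>i<n. \<forall>j<n. A i j = B i j)"

definition zero_mat :: "nat \<Rightarrow> nat \<Rightarrow> real" where
  "zero_mat = (\<lambda>i j. 0)"

definition id_mat :: "nat \<Rightarrow> nat \<Rightarrow> real" where
  "id_mat = (\<lambda>i j. if i = j then 1 else 0)"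

fun mpow :: "nat \<Rightarrow> (nat \<Rightarrow> nat \<Rightarrow> real) \<Rightarrow> nat \<Rightarrow> (nat \<Rightarrow> nat \<Rightarrow> real)" where
  "mpow n A 0 = id_mat"
| "mpow n A (Suc m) = mmult n (mpow n A m) A"

definition max_nilpotent :: "nat \<Rightarrow> (nat \<Rightarrow> nat \<Rightarrow> real) \<Rightarrow> bool" where
  "max_nilpotent n A \<longleftrightarrow> (\<exists>m. mat_eq n (mpow n A m) zero_mat)"

definition max_invertible :: "nat \<Rightarrow> (nat \<Rightarrow> nat \<Rightarrow> real) \<Rightarrow> (nat \<Rightarrow> nat \<Rightarrow> real) \<Rightarrow> bool" where
  "max_invertible n P Q \<longleftrightarrow> nonneg_mat n P \<and> nonneg_mat n Q \<and>
     mat_eq n (mmult n P Q) id_mat \<and> mat_eq n (mmult n Q P) id_mat"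

definition upper_triangular :: "nat \<Rightarrow> (nat \<Rightarrow> nat \<Rightarrow> real) \<Rightarrow> bool" where
  "upper_triangular n A \<longleftrightarrow> (\<forall>i<n. \<forall>j<n. j < i \<longrightarrow> A i j = 0)"

definition simult_triangularizable :: "nat \<Rightarrow> (nat \<Rightarrow> nat \<Rightarrow> real) \<Rightarrow> (nat \<Rightarrow> nat \<Rightarrow> real) \<Rightarrow> bool" where
  "simult_triangularizable n A B \<longleftrightarrow> (\<exists>P Pinv. max_invertible n P Pinv \<and>
     upper_triangular n (mmult n (mmult n Pinv A) P) \<and>
     upper_triangular n (mmult n (mmult n Pinv B) P))"

end

theory Submission
  imports Defs
begin

fun path :: "(nat \<Rightarrow> nat \<Rightarrow> bool) \<Rightarrow> nat \<Rightarrow> nat \<Rightarrow> nat \<Rightarrow> bool" where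
  "path P 0 x y = (x = y)"
| "path P (Suc m) x y = (\<exists>z. path P m x z \<and> P z y)"

lemma path_front: "path P (Suc m) x y \<longleftrightarrow> (\<exists>z. P x z \<and> path P m z y)"
  by (induction m arbitrary: y) auto

lemma path_prefix: "path P (a+b) x y \<Longrightarrow> \<exists>z. path P a x z"
  by (induction b arbitrary: y) auto

lemma path_bound: "path P m x y \<Longrightarrow> (\<And>u v. P u v \<Longrightarrow> v<n) \<Longrightarrow> x<n \<Longrightarrow> y<n"
  by (induction m arbitrary: y) auto

lemma mm_ge:
  assumes "k < n" shows "M i k * N k j \<le> mmult n M N i j"
  using assms by (auto simp: mmult_def intro!: Max_ge)

lemma mpow_pos:
  assumes "\<And>u v. P u v \<Longrightarrow> u<n \<and> v<n \<and> A u v > 0"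
  shows "path P m x y \<Longrightarrow> mpow n A m x y > 0"
proof (induction m arbitrary: y)
  case 0 thus ?case by (simp add: id_mat_def)
next
  case (Suc m)
  then obtain z where z: "path P m x z" "P z y" by auto
  have "mpow n A m x z * A z y > 0" using Suc.IH[OF z(1)] assms[OF z(2)] by simp
  also have "\<dots> \<le> mpow n A (Suc m) x y" using assms[OF z(2)] mm_ge by simp
  finally show ?case .
qed

lemma nil_nopath:
  assumes "mat_eq n (mpow n A m) zero_mat" "\<And>u v. P u v \<Longrightarrow> u<n \<and> v<n \<and> A u v > 0" "x<n"
  shows "\<not> path P m x y"
proof
  assume p: "path P m x y"
  have "y < n" using path_bound[OF p _ assms(3)] assms(2) by blast
  moreover have "mpow n A m x y > 0" using mpow_pos[OF assms(2) p] by blast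
  ultimately show False using assms(1,3) by (auto simp: mat_eq_def zero_mat_def)
qed

lemma Max_ins0:
  fixes f :: "nat \<Rightarrow> real"
  assumes "finite S" "\<forall>k\<in>S. f k \<le> c" "c \<ge> 0" "c = 0 \<or> (\<exists>k\<in>S. f k = c)"
  shows "Max (insert 0 (f ` S)) = c"
  using assms by (intro Max_eqI) auto

lemma perm_left:
  assumes "s < n" "\<forall>k<n. M k l \<ge> 0" "\<forall>k. Q i k = (if k = s then 1 else 0)"
  shows "mmult n Q M i l = M s l"
  unfolding mmult_def using assms by (intro Max_ins0) auto

lemma perm_right:
  assumes "s < n" "\<forall>k<n. M i k \<ge> 0" "\<forall>k. Q k j = (if k = s then 1 else 0)"
  shows "mmult n M Q i j = M i s"
  unfolding mmult_def using assms by (intro Max_ins0) auto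


lemma topo:
  fixes R :: "nat \<Rightarrow> nat \<Rightarrow> bool"
  assumes nowalk: "\<And>x w. \<not> path R K x w"
  shows "\<exists>\<sigma>. (\<forall>i<n. \<sigma> i < n) \<and> inj_on \<sigma> {..<n} \<and> (\<forall>x<n. \<exists>i<n. \<sigma> i = x)
     \<and> (\<forall>i<n. \<forall>j<n. R (\<sigma> i) (\<sigma> j) \<longrightarrow> i < j)"
proof -
  define W where "W x = {k. \<exists>w. path R k x w}" for x
  have fin: "finite (W x)" for x
  proof -
    have "W x \<subseteq> {..<K}"
    proof
      fix k assume "k \<in> W x"
      then obtain w where w: "path R k x w" by (auto simp: W_def)
      show "k \<in> {..<K}"
      proof (rule ccontr)
        assume "k \<notin> {..<K}"
        then have "k = K + (k - K)" by auto
        with w have "path R (K + (k - K)) x w" by simp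
        from path_prefix[OF this] nowalk show False by blast
      qed
    qed
    thus ?thesis using finite_subset by blast
  qed
  have ne: "0 \<in> W x" for x by (auto simp: W_def)
  define h where "h x = Max (W x)" for x
  have hW: "\<exists>w. path R (h x) x w" for x
  proof -
    have "h x \<in> W x" unfolding h_def using Max_in[OF fin] ne by blast
    thus ?thesis unfolding W_def by blast
  qed
  have edge: "h y < h x" if "R x y" for x y
  proof -
    obtain w where "path R (h y) y w" using hW by blast
    hence "path R (Suc (h y)) x w" using that path_front by blast
    hence "Suc (h y) \<in> W x" unfolding W_def by blast
    hence "Suc (h y) \<le> h x" unfolding h_def using fin by (rule Max_ge[rotated])
    thus ?thesis by simp
  qed
  define key where "key x = - int (h x)" for x
  define xs where "xs = sort_key key [0..<n]"
  have len: "length xs = n" by (simp add: xs_def)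
  have dist: "distinct xs" by (simp add: xs_def)
  have st: "set xs = {..<n}" by (auto simp: xs_def)
  have so: "sorted (map key xs)" by (simp add: xs_def)
  show ?thesis
  proof (intro exI[of _ "nth xs"] conjI allI impI)
    fix i assume "i < n" thus "xs ! i < n" using st len nth_mem by blast
  next
    show "inj_on ((!) xs) {..<n}" using dist len by (auto simp: inj_on_def nth_eq_iff_index_eq)
  next
    fix x assume "x < n" thus "\<exists>i<n. xs ! i = x" using st len by (metis in_set_conv_nth lessThan_iff)
  next
    fix i j assume ij: "i < n" "j < n" "R (xs ! i) (xs ! j)"
    show "i < j"
    proof (rule ccontr)
      assume "\<not> i < j"
      hence "j \<le> i" by simp
      hence "map key xs ! j \<le> map key xs ! i" using so ij len by (intro sorted_nth_mono) auto
      hence "h (xs ! i) \<le> h (xs ! j)" using ij len by (simp add: key_def)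
      with edge[OF ij(3)] show False by simp
    qed
  qed
qed


theorem theorem3p9:
  fixes n :: nat and A B :: "nat \<Rightarrow> nat \<Rightarrow> real"
  assumes "nonneg_mat n A" and "nonneg_mat n B"
    and "max_nilpotent n A" and "max_nilpotent n B"
    and "C = mplus (mmult n A B) (mmult n B A)"
    and "mat_eq n (mmult n A C) zero_mat" and "mat_eq n (mmult n B C) zero_mat"
  shows "simult_triangularizable n A B"
proof -
  note nnA = assms(1)[unfolded nonneg_mat_def]
  note nnB = assms(2)[unfolded nonneg_mat_def]
  obtain mA where nA: "mat_eq n (mpow n A mA) zero_mat" using assms(3) max_nilpotent_def by blast
  obtain mB where nB: "mat_eq n (mpow n B mB) zero_mat" using assms(4) max_nilpotent_def by blast
  define PA where "PA u v = (u<n \<and> v<n \<and> A u v > 0)" for u v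
  define PB where "PB u v = (u<n \<and> v<n \<and> B u v > 0)" for u v
  define R where "R u v = (PA u v \<or> PB u v)" for u v
  have Cpos: "C y u > 0" if "(PB y z \<and> PA z u) \<or> (PA y z \<and> PB z u)" for y z u
  proof -
    have "B y z * A z u \<le> mmult n B A y u" "A y z * B z u \<le> mmult n A B y u"
      using that mm_ge unfolding PA_def PB_def by blast+
    moreover have "0 < B y z * A z u \<or> 0 < A y z * B z u" using that unfolding PA_def PB_def by auto
    ultimately show ?thesis using assms(5) by (auto simp: mplus_def)
  qed
  have contra: False if "R x y" "(PB y z \<and> PA z u) \<or> (PA y z \<and> PB z u)" for x y z u
  proof -
    have c: "C y u > 0" using Cpos[OF that(2)] .
    have xu: "x < n" "y < n" "u < n" using that unfolding R_def PA_def PB_def by auto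
    have "A x y * C y u \<le> mmult n A C x u" "B x y * C y u \<le> mmult n B C x u"
      using xu mm_ge by blast+
    moreover have "mmult n A C x u = 0" "mmult n B C x u = 0"
      using assms(6,7) xu by (auto simp: mat_eq_def zero_mat_def)
    moreover have "0 < A x y * C y u \<or> 0 < B x y * C y u" using that(1) c unfolding R_def PA_def PB_def by auto
    ultimately show False by linarith
  qed
  have homog: "R x y \<Longrightarrow> path R k y w \<Longrightarrow> path PA k y w \<or> path PB k y w" for k x y w
  proof (induction k arbitrary: x y)
    case 0 thus ?case by simp
  next
    case (Suc k)
    then obtain z where z: "R y z" "path R k z w" using path_front by blast
    from Suc.IH[OF z] have ih: "path PA k z w \<or> path PB k z w" .
    show ?case
    proof (cases k)
      case 0
      then show ?thesis using z ih unfolding R_def by auto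
    next
      case (Suc k')
      show ?thesis
      proof (cases "PA y z")
        case True
        show ?thesis
        proof (cases "path PA k z w")
          case True
          then show ?thesis using \<open>PA y z\<close> path_front by blast
        next
          case False
          with ih have "path PB k z w" by blast
          then obtain u where "PB z u" using path_front[of PB k' z w] Suc by blast
          then show ?thesis using contra[OF Suc.prems(1)] \<open>PA y z\<close> by blast
        qed
      next
        case False
        hence PByz: "PB y z" using z(1) unfolding R_def by blast
        show ?thesis
        proof (cases "path PB k z w")
          case True
          then show ?thesis using PByz path_front by blast
        next
          case False
          with ih have "path PA k z w" by blast
          then obtain u where "PA z u" using path_front[of PA k' z w] Suc by blast
          then show ?thesis using contra[OF Suc.prems(1)] PByz by blast
        qed
      qed
    qed
  qed
  have nowalk: "\<not> path R (Suc (mA + mB)) x w" for x w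
  proof
    assume "path R (Suc (mA + mB)) x w"
    then obtain y where y: "R x y" "path R (mA + mB) y w" using path_front by blast
    have yn: "y < n" using y(1) unfolding R_def PA_def PB_def by auto
    from homog[OF y] show False
    proof
      assume "path PA (mA + mB) y w"
      then obtain z where "path PA mA y z" using path_prefix by blast
      moreover have "\<not> path PA mA y z"
        by (rule nil_nopath[OF nA _ yn]) (simp add: PA_def)
      ultimately show False by blast
    next
      assume "path PB (mA + mB) y w"
      hence "path PB (mB + mA) y w" by (simp add: add.commute)
      then obtain z where "path PB mB y z" using path_prefix by blast
      moreover have "\<not> path PB mB y z"
        by (rule nil_nopath[OF nB _ yn]) (simp add: PB_def)
      ultimately show False by blast
    qed
  qed
  obtain \<sigma> where H: "(\<forall>i<n. \<sigma> i < n) \<and> inj_on \<sigma> {..<n} \<and> (\<forall>x<n. \<exists>i<n. \<sigma> i = x)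
     \<and> (\<forall>i<n. \<forall>j<n. R (\<sigma> i) (\<sigma> j) \<longrightarrow> i < j)"
    using topo[of R "Suc (mA + mB)" n, OF nowalk] by (elim exE) 
  have sb: "\<forall>i<n. \<sigma> i < n" and sinj: "inj_on \<sigma> {..<n}" and ssurj: "\<forall>x<n. \<exists>i<n. \<sigma> i = x"
    and sord: "\<forall>i<n. \<forall>j<n. R (\<sigma> i) (\<sigma> j) \<longrightarrow> i < j" using H by simp_all
  define P :: "nat \<Rightarrow> nat \<Rightarrow> real" where "P k j = (if k = \<sigma> j then 1 else 0)" for k j
  define Q :: "nat \<Rightarrow> nat \<Rightarrow> real" where "Q i k = (if k = \<sigma> i then 1 else 0)" for i k
  have inv: "max_invertible n P Q"
    unfolding max_invertible_def
  proof (intro conjI)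
    show "nonneg_mat n P" "nonneg_mat n Q" by (auto simp: nonneg_mat_def P_def Q_def)
    show "mat_eq n (mmult n P Q) id_mat"
      unfolding mat_eq_def
    proof (intro allI impI)
      fix i j assume ij: "i < n" "j < n"
      obtain k where k: "k < n" "\<sigma> k = i" using ssurj ij by blast
      show "mmult n P Q i j = id_mat i j"
        unfolding mmult_def using k
        by (intro Max_ins0) (auto simp: P_def Q_def id_mat_def)
    qed
    show "mat_eq n (mmult n Q P) id_mat"
      unfolding mat_eq_def
    proof (intro allI impI)
      fix i j assume ij: "i < n" "j < n"
      show "mmult n Q P i j = id_mat i j"
      proof (cases "i = j")
        case True
        then show ?thesis unfolding mmult_def using sb ij
          by (intro Max_ins0) (auto simp: P_def Q_def id_mat_def)
      next
        case False
        hence ne: "\<sigma> i \<noteq> \<sigma> j" using sinj ij by (auto simp: inj_on_def)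
        have "\<forall>k\<in>{..<n}. Q i k * P k j \<le> 0" using ne by (simp add: P_def Q_def)
        then show ?thesis unfolding mmult_def using False
          by (intro Max_ins0) (auto simp: id_mat_def)
      qed
    qed
  qed
  have conj: "mmult n (mmult n Q M) P i j = M (\<sigma> i) (\<sigma> j)"
    if nn: "\<forall>i<n. \<forall>j<n. M i j \<ge> 0" and ij: "i < n" "j < n" for M i j
  proof -
    have QM: "mmult n Q M i k = M (\<sigma> i) k" if "k < n" for k
      using perm_left[of "\<sigma> i" n M k Q i] sb ij nn that by (simp add: Q_def)
    have "mmult n (mmult n Q M) P i j = mmult n Q M i (\<sigma> j)"
      using perm_right[of "\<sigma> j" n "mmult n Q M" i P j] sb ij nn QM by (simp add: P_def)
    also have "\<dots> = M (\<sigma> i) (\<sigma> j)" using QM sb ij by simp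
    finally show ?thesis .
  qed
  have tri: "upper_triangular n (mmult n (mmult n Q M) P)"
    if nn: "\<forall>i<n. \<forall>j<n. M i j \<ge> 0" and rel: "\<And>u v. u < n \<Longrightarrow> v < n \<Longrightarrow> M u v > 0 \<Longrightarrow> R u v" for M
    unfolding upper_triangular_def
  proof (intro allI impI)
    fix i j assume ij: "i < n" "j < n" "j < i"
    have "\<not> R (\<sigma> i) (\<sigma> j)"
    proof
      assume "R (\<sigma> i) (\<sigma> j)"
      hence "i < j" using sord ij(1,2) by blast
      with ij(3) show False by simp
    qed
    hence "\<not> M (\<sigma> i) (\<sigma> j) > 0" using rel sb ij by blast
    moreover have "M (\<sigma> i) (\<sigma> j) \<ge> 0" using nn sb ij by blast
    ultimately show "mmult n (mmult n Q M) P i j = 0" using conj[OF nn ij(1,2)] by simp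
  qed
  show ?thesis
    unfolding simult_triangularizable_def
    using inv tri[OF nnA] tri[OF nnB] unfolding R_def PA_def PB_def by blast
qed

end
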